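(* Let $G$, $A$, $H$, $\beta$, $G_\beta$, $(K,v)$, $\sigma$, $\delta$ be as in the context. Then the map $val:K(t^H,\beta)_\delta\to G_\beta\cup\{\infty\}$ given by $val\left(\sum_{h\in S}a_ht^h\right)=(v(a_{h_0}),h_0)$, where $h_0$ is the least element of the support $S$ (with $a_{h_0}\neq 0$), and $val(0)=\infty$ (a symbol greater than every element of $G_\beta$), is a valuation on the field $K(t^H,\beta)_\delta$.
   Context: $G$ is an ordered abelian group with smallest nonzero convex subgroup $A$, $H=G/A$ with the induced order, $\rho:G\to H$ the projection; $\alpha:H\to G$ is a transversal map ($\rho\alpha=\mathrm{id}_H$, $\alpha(0)=0$) and $\beta(h,h')=\alpha(h+h')-\alpha(h)-\alpha(h')\in A$. $G_\beta$ is $A\times H$ with $(z,h)+(z',h')=(z+z'-\beta(h,h'),h+h')$ and lexicographic order ($(z,h)\le(z',h')$ iff $h<h'$, or $h=h'$ and $z\le z'$); it is an ordered abelian group. $(K,v)$ is a valued field of characteristic $0$, residue characteristic $p$, value group $A$, with cross-section $\sigma:A\to K^\times$ (homomorphism, $v(\sigma(a))=a$). $\delta$ is an infinite cardinal and $K(t^H,\beta)_\delta$ is the field of formal sums $\sum_{h\in S}a_ht^h$, $S\subseteq H$ well ordered, $|S|\le\delta$, $a_h\in K$, with coefficientwise addition and multiplication $\left(\sum a_ht^h\right)\left(\sum b_ht^h\right)=\sum_l\left(\sum_{h+h'=l}a_hb_{h'}\sigma(-\beta(h,h'))\right)t^l$. *)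

theory Defs
  imports Main
begin

definition convex_subgroup :: "'g::linordered_ab_group_add set \<Rightarrow> bool" where
  "convex_subgroup B \<longleftrightarrow> 0 \<in> B \<and> (\<forall>x\<in>B. \<forall>y\<in>B. x + y \<in> B) \<and> (\<forall>x\<in>B. - x \<in> B)
     \<and> (\<forall>x y z. x \<in> B \<longrightarrow> z \<in> B \<longrightarrow> x \<le> y \<longrightarrow> y \<le> z \<longrightarrow> y \<in> B)"

definition smallest_nonzero_convex :: "'g::linordered_ab_group_add set \<Rightarrow> bool" where
  "smallest_nonzero_convex A \<longleftrightarrow> convex_subgroup A \<and> A \<noteq> {0}
     \<and> (\<forall>B. convex_subgroup B \<and> B \<noteq> {0} \<longrightarrow> A \<subseteq> B)"

text \<open>Cosets: the projection rho : G \<rightarrow> H = G/A; elements of H are the cosets x + A.\<close>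
definition rho :: "'g::linordered_ab_group_add set \<Rightarrow> 'g \<Rightarrow> 'g set" where
  "rho A x = (\<lambda>a. x + a) ` A"

definition Hq :: "'g::linordered_ab_group_add set \<Rightarrow> 'g set set" where
  "Hq A = range (rho A)"

definition hadd :: "'g::linordered_ab_group_add set \<Rightarrow> 'g set \<Rightarrow> 'g set" where
  "hadd h h' = {x + y | x y. x \<in> h \<and> y \<in> h'}"

definition hle :: "'g::linordered_ab_group_add set \<Rightarrow> 'g set \<Rightarrow> 'g set \<Rightarrow> bool" where
  "hle A h h' \<longleftrightarrow> (\<exists>x y. h = rho A x \<and> h' = rho A y \<and> x \<le> y)"

definition hless :: "'g::linordered_ab_group_add set \<Rightarrow> 'g set \<Rightarrow> 'g set \<Rightarrow> bool" where
  "hless A h h' \<longleftrightarrow> hle A h h' \<and> h \<noteq> h'"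

definition transversal :: "'g::linordered_ab_group_add set \<Rightarrow> ('g set \<Rightarrow> 'g) \<Rightarrow> bool" where
  "transversal A \<alpha> \<longleftrightarrow> (\<forall>h\<in>Hq A. rho A (\<alpha> h) = h) \<and> \<alpha> (rho A 0) = 0"

definition beta :: "('g::linordered_ab_group_add set \<Rightarrow> 'g) \<Rightarrow> 'g set \<Rightarrow> 'g set \<Rightarrow> 'g" where
  "beta \<alpha> h h' = \<alpha> (hadd h h') - \<alpha> h - \<alpha> h'"

definition gb_add :: "('g::linordered_ab_group_add set \<Rightarrow> 'g) \<Rightarrow> 'g \<times> 'g set \<Rightarrow> 'g \<times> 'g set \<Rightarrow> 'g \<times> 'g set" where
  "gb_add \<alpha> p q = (fst p + fst q - beta \<alpha> (snd p) (snd q), hadd (snd p) (snd q))"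

definition gb_le :: "'g::linordered_ab_group_add set \<Rightarrow> 'g \<times> 'g set \<Rightarrow> 'g \<times> 'g set \<Rightarrow> bool" where
  "gb_le A p q \<longleftrightarrow> hless A (snd p) (snd q) \<or> (snd p = snd q \<and> fst p \<le> fst q)"

text \<open>None plays the role of \<infinity>, which is greater than every element and absorbing for +.\<close>
definition gbi_add :: "('g::linordered_ab_group_add set \<Rightarrow> 'g) \<Rightarrow> ('g \<times> 'g set) option \<Rightarrow> ('g \<times> 'g set) option \<Rightarrow> ('g \<times> 'g set) option" where
  "gbi_add \<alpha> x y = (case x of None \<Rightarrow> None | Some p \<Rightarrow> (case y of None \<Rightarrow> None | Some q \<Rightarrow> Some (gb_add \<alpha> p q)))"

definition gbi_le :: "'g::linordered_ab_group_add set \<Rightarrow> ('g \<times> 'g set) option \<Rightarrow> ('g \<times> 'g set) option \<Rightarrow> bool" where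
  "gbi_le A x y = (case y of None \<Rightarrow> True | Some q \<Rightarrow> (case x of None \<Rightarrow> False | Some p \<Rightarrow> gb_le A p q))"

text \<open>v : K \<rightarrow> A \<union> {\<infinity>}, with None = \<infinity>.\<close>
definition oi_le :: "'g::linordered_ab_group_add option \<Rightarrow> 'g option \<Rightarrow> bool" where
  "oi_le x y = (case y of None \<Rightarrow> True | Some b \<Rightarrow> (case x of None \<Rightarrow> False | Some a \<Rightarrow> a \<le> b))"

definition oi_add :: "'g::linordered_ab_group_add option \<Rightarrow> 'g option \<Rightarrow> 'g option" where
  "oi_add x y = (case x of None \<Rightarrow> None | Some a \<Rightarrow> (case y of None \<Rightarrow> None | Some b \<Rightarrow> Some (a + b)))"

definition valued_field :: "'g::linordered_ab_group_add set \<Rightarrow> ('k::field \<Rightarrow> 'g option) \<Rightarrow> bool" where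
  "valued_field A v \<longleftrightarrow>
     (\<forall>x. v x = None \<longleftrightarrow> x = 0)
   \<and> (\<forall>x. x \<noteq> 0 \<longrightarrow> the (v x) \<in> A)
   \<and> (\<forall>a\<in>A. \<exists>x. v x = Some a)
   \<and> (\<forall>x y. v (x * y) = oi_add (v x) (v y))
   \<and> (\<forall>x y. oi_le (v x) (v (x + y)) \<or> oi_le (v y) (v (x + y)))"

text \<open>The residue field has characteristic p: n \<cdot> 1 lies in the maximal ideal iff p divides n.\<close>
definition residue_char :: "('k::field \<Rightarrow> 'g::linordered_ab_group_add option) \<Rightarrow> nat \<Rightarrow> bool" where
  "residue_char v p \<longleftrightarrow> (\<forall>n::nat. (\<not> oi_le (v (of_nat n)) (Some 0)) \<longleftrightarrow> p dvd n)"

definition cross_section :: "'g::linordered_ab_group_add set \<Rightarrow> ('k::field \<Rightarrow> 'g option) \<Rightarrow> ('g \<Rightarrow> 'k) \<Rightarrow> bool" where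
  "cross_section A v \<sigma> \<longleftrightarrow> (\<forall>a\<in>A. \<sigma> a \<noteq> 0 \<and> v (\<sigma> a) = Some a)
     \<and> (\<forall>a\<in>A. \<forall>b\<in>A. \<sigma> (a + b) = \<sigma> a * \<sigma> b)"

text \<open>A formal sum \<Sum>_{h\<in>S} a_h t^h is represented by its coefficient function H \<rightarrow> K.
  The infinite cardinal delta is represented by an infinite set D of cardinality delta.\<close>

definition supp :: "('h \<Rightarrow> 'k::zero) \<Rightarrow> 'h set" where
  "supp f = {h. f h \<noteq> 0}"

definition well_ordered_H :: "'g::linordered_ab_group_add set \<Rightarrow> 'g set set \<Rightarrow> bool" where
  "well_ordered_H A S \<longleftrightarrow> (\<forall>T. T \<subseteq> S \<and> T \<noteq> {} \<longrightarrow> (\<exists>m\<in>T. \<forall>t\<in>T. hle A m t))"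

definition card_le :: "'a set \<Rightarrow> 'd set \<Rightarrow> bool" where
  "card_le S D \<longleftrightarrow> (\<exists>g. inj_on g S \<and> g ` S \<subseteq> D)"

definition FS :: "'g::linordered_ab_group_add set \<Rightarrow> 'd set \<Rightarrow> ('g set \<Rightarrow> 'k::field) set" where
  "FS A D = {f. supp f \<subseteq> Hq A \<and> well_ordered_H A (supp f) \<and> card_le (supp f) D}"

definition fs_zero :: "'g set \<Rightarrow> 'k::field" where
  "fs_zero = (\<lambda>_. 0)"

definition fs_add :: "('g set \<Rightarrow> 'k::field) \<Rightarrow> ('g set \<Rightarrow> 'k) \<Rightarrow> 'g set \<Rightarrow> 'k" where
  "fs_add f g = (\<lambda>h. f h + g h)"

definition fs_mul :: "('g::linordered_ab_group_add set \<Rightarrow> 'g) \<Rightarrow> ('g \<Rightarrow> 'k::field)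
    \<Rightarrow> ('g set \<Rightarrow> 'k) \<Rightarrow> ('g set \<Rightarrow> 'k) \<Rightarrow> 'g set \<Rightarrow> 'k" where
  "fs_mul \<alpha> \<sigma> f g = (\<lambda>l. \<Sum>(h, h') \<in> {(h, h'). h \<in> supp f \<and> h' \<in> supp g \<and> hadd h h' = l}.
        f h * g h' * \<sigma> (- beta \<alpha> h h'))"

definition fs_val :: "'g::linordered_ab_group_add set \<Rightarrow> ('k::field \<Rightarrow> 'g option)
    \<Rightarrow> ('g set \<Rightarrow> 'k) \<Rightarrow> ('g \<times> 'g set) option" where
  "fs_val A v f = (if f = fs_zero then None else
     (let h0 = (THE h. h \<in> supp f \<and> (\<forall>h'\<in>supp f. hle A h h')) in Some (the (v (f h0)), h0)))"

definition is_valuation_Gbeta :: "'g::linordered_ab_group_add set \<Rightarrow> ('g set \<Rightarrow> 'g)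
    \<Rightarrow> 'f set \<Rightarrow> 'f \<Rightarrow> ('f \<Rightarrow> 'f \<Rightarrow> 'f) \<Rightarrow> ('f \<Rightarrow> 'f \<Rightarrow> 'f) \<Rightarrow> ('f \<Rightarrow> ('g \<times> 'g set) option) \<Rightarrow> bool" where
  "is_valuation_Gbeta A \<alpha> F z ad mu w \<longleftrightarrow>
     (\<forall>x\<in>F. w x = None \<or> (\<exists>p. w x = Some p \<and> fst p \<in> A \<and> snd p \<in> Hq A))
   \<and> (\<forall>x\<in>F. w x = None \<longleftrightarrow> x = z)
   \<and> (\<forall>x\<in>F. \<forall>y\<in>F. w (mu x y) = gbi_add \<alpha> (w x) (w y))
   \<and> (\<forall>x\<in>F. \<forall>y\<in>F. gbi_le A (w x) (w (ad x y)) \<or> gbi_le A (w y) (w (ad x y)))"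

end

theory Submission
  imports Defs
begin

locale cvx = fixes A :: "'g::linordered_ab_group_add set"
  assumes cs: "convex_subgroup A"
begin

lemma A0: "0 \<in> A" using cs unfolding convex_subgroup_def by blast
lemma A_add: "x \<in> A \<Longrightarrow> y \<in> A \<Longrightarrow> x + y \<in> A" using cs unfolding convex_subgroup_def by blast
lemma A_neg: "x \<in> A \<Longrightarrow> - x \<in> A" using cs unfolding convex_subgroup_def by blast
lemma A_diff: "x \<in> A \<Longrightarrow> y \<in> A \<Longrightarrow> x - y \<in> A"
  using A_add[of x "-y"] A_neg[of y] by simp
lemma A_conv: "x \<in> A \<Longrightarrow> z \<in> A \<Longrightarrow> x \<le> y \<Longrightarrow> y \<le> z \<Longrightarrow> y \<in> A"
  using cs unfolding convex_subgroup_def by blast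
lemma A_neg_iff: "- x \<in> A \<longleftrightarrow> x \<in> A" using A_neg[of x] A_neg[of "-x"] by auto
lemma A_swap: "x - y \<in> A \<longleftrightarrow> y - x \<in> A" using A_neg_iff[of "x - y"] by simp

lemma rho_eq: "rho A x = rho A y \<longleftrightarrow> x - y \<in> A"
proof
  assume h: "rho A x = rho A y"
  have "x + 0 \<in> rho A x" unfolding rho_def using A0 by (rule imageI)
  then have "x \<in> rho A x" by simp
  then obtain a where "a \<in> A" "x = y + a" using h unfolding rho_def by auto
  then show "x - y \<in> A" by (simp add: algebra_simps)
next
  assume h: "x - y \<in> A"
  show "rho A x = rho A y"
  proof
    show "rho A x \<subseteq> rho A y" unfolding rho_def
    proof
      fix z assume "z \<in> (+) x ` A"
      then obtain a where a: "a \<in> A" "z = x + a" by auto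
      then have "z = y + ((x - y) + a)" by (simp add: algebra_simps)
      moreover have "(x - y) + a \<in> A" using A_add h a by blast
      ultimately show "z \<in> (+) y ` A" by blast
    qed
    show "rho A y \<subseteq> rho A x" unfolding rho_def
    proof
      fix z assume "z \<in> (+) y ` A"
      then obtain a where a: "a \<in> A" "z = y + a" by auto
      then have "z = x + ((y - x) + a)" by (simp add: algebra_simps)
      moreover have "(y - x) + a \<in> A" using A_add h a A_swap by blast
      ultimately show "z \<in> (+) x ` A" by blast
    qed
  qed
qed

lemma hadd_rho: "hadd (rho A x) (rho A y) = rho A (x + y)"
proof
  show "hadd (rho A x) (rho A y) \<subseteq> rho A (x + y)"
  proof
    fix z assume "z \<in> hadd (rho A x) (rho A y)"
    then obtain a b where "a \<in> A" "b \<in> A" "z = (x + a) + (y + b)" unfolding hadd_def rho_def by auto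
    then have "z = (x + y) + (a + b)" by (simp add: algebra_simps)
    moreover have "a + b \<in> A" using A_add \<open>a \<in> A\<close> \<open>b \<in> A\<close> by blast
    ultimately show "z \<in> rho A (x + y)" unfolding rho_def by blast
  qed
  show "rho A (x + y) \<subseteq> hadd (rho A x) (rho A y)"
  proof
    fix z assume "z \<in> rho A (x + y)"
    then obtain c where c: "c \<in> A" "z = x + y + c" unfolding rho_def by auto
    have "x + c \<in> rho A x" "y + 0 \<in> rho A y" using c A0 unfolding rho_def by auto
    moreover have "z = (x + c) + (y + 0)" using c by (simp add: algebra_simps)
    ultimately show "z \<in> hadd (rho A x) (rho A y)" unfolding hadd_def by blast
  qed
qed

definition Rl where "Rl x y \<longleftrightarrow> x \<le> y \<or> x - y \<in> A"

lemma hle_rho: "hle A (rho A x) (rho A y) \<longleftrightarrow> Rl x y"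
proof
  assume "hle A (rho A x) (rho A y)"
  then obtain x' y' where e: "rho A x = rho A x'" "rho A y = rho A y'" "x' \<le> y'"
    unfolding hle_def by blast
  show "Rl x y"
  proof (cases "x \<le> y")
    case True then show ?thesis unfolding Rl_def by simp
  next
    case False
    have a1: "x - x' \<in> A" "y' - y \<in> A" using e rho_eq A_swap by auto
    have "x - y \<le> (x - x') + (y' - y)" using e(3) by (simp add: algebra_simps)
    moreover have "0 \<le> x - y" using False by simp
    ultimately have "x - y \<in> A" using A_conv[OF A0 A_add[OF a1]] by blast
    then show ?thesis unfolding Rl_def by simp
  qed
next
  assume "Rl x y"
  then show "hle A (rho A x) (rho A y)"
  proof (unfold Rl_def, elim disjE)
    assume "x \<le> y" then show ?thesis unfolding hle_def by blast
  next
    assume "x - y \<in> A" then have "rho A x = rho A y" using rho_eq by simp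
    then show ?thesis unfolding hle_def by blast
  qed
qed

lemma Rl_refl: "Rl x x" unfolding Rl_def by simp
lemma Rl_total: "Rl x y \<or> Rl y x" unfolding Rl_def by auto

lemma Rl_trans: assumes "Rl x y" "Rl y z" shows "Rl x z"
proof (cases "x \<le> z")
  case True then show ?thesis unfolding Rl_def by simp
next
  case False
  then have zx: "0 \<le> x - z" by simp
  consider "x \<le> y" "y \<le> z" | "x - y \<in> A" "y - z \<in> A" | "x \<le> y" "y - z \<in> A" | "x - y \<in> A" "y \<le> z"
    using assms unfolding Rl_def by blast
  then show ?thesis
  proof cases
    case 1 then show ?thesis using False by simp
  next
    case 2
    have "x - z = (x - y) + (y - z)" by (simp add: algebra_simps)
    then show ?thesis using A_add[OF 2] unfolding Rl_def by simp
  next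
    case 3
    have "x - z \<le> y - z" using 3 by simp
    then show ?thesis using A_conv[OF A0 3(2) zx] unfolding Rl_def by simp
  next
    case 4
    have "x - z \<le> x - y" using 4 by (simp add: algebra_simps)
    then show ?thesis using A_conv[OF A0 4(1) zx] unfolding Rl_def by simp
  qed
qed

lemma Rl_antisym: "Rl x y \<Longrightarrow> Rl y x \<Longrightarrow> x - y \<in> A"
  unfolding Rl_def using A0 A_swap by (auto dest: antisym)

lemma Rl_transl: "Rl (x + z) (y + z) \<longleftrightarrow> Rl x y" unfolding Rl_def by simp

lemma Rl_add: "Rl x x' \<Longrightarrow> Rl y y' \<Longrightarrow> Rl (x + y) (x' + y')"
proof -
  assume a: "Rl x x'" "Rl y y'"
  have "Rl (x + y) (x' + y)" using a(1) Rl_transl by simp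
  moreover have "Rl (y + x') (y' + x')" using a(2) Rl_transl by simp
  then have "Rl (x' + y) (x' + y')" by (simp add: add.commute)
  ultimately show ?thesis using Rl_trans by blast
qed

lemma Rl_add_strict: assumes "Rl x x'" "x - x' \<notin> A" "Rl y y'"
  shows "(x + y) - (x' + y') \<notin> A"
proof
  assume c: "(x + y) - (x' + y') \<in> A"
  have e: "x - x' = ((x + y) - (x' + y')) + (y' - y)" by (simp add: algebra_simps)
  show False
  proof (cases "y - y' \<in> A")
    case True
    then have "y' - y \<in> A" using A_swap by simp
    then have "x - x' \<in> A" using A_add[OF c] e by metis
    then show False using assms(2) by simp
  next
    case False
    then have "y \<le> y'" using assms(3) unfolding Rl_def by simp
    then have "(x + y) - (x' + y') \<le> x - x'" using e by (simp add: algebra_simps)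
    moreover have "x \<le> x'" using assms(1,2) unfolding Rl_def by simp
    ultimately have "x - x' \<in> A" using A_conv[OF c A0] by simp
    then show False using assms(2) by simp
  qed
qed

definition rep where "rep h = (SOME x. h = rho A x)"

lemma Hq_rep: "h \<in> Hq A \<Longrightarrow> h = rho A (rep h)"
proof -
  assume "h \<in> Hq A"
  then have "\<exists>x. h = rho A x" unfolding Hq_def by blast
  then show ?thesis unfolding rep_def by (rule someI_ex)
qed

lemma rho_Hq: "rho A x \<in> Hq A" unfolding Hq_def by simp

lemma hle_Hq: "h \<in> Hq A \<Longrightarrow> h' \<in> Hq A \<Longrightarrow> hle A h h' \<longleftrightarrow> Rl (rep h) (rep h')"
proof -
  assume a: "h \<in> Hq A" "h' \<in> Hq A"
  have "\<And>x y. h = rho A x \<Longrightarrow> h' = rho A y \<Longrightarrow> hle A h h' \<longleftrightarrow> Rl x y" using hle_rho by simp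
  then show ?thesis using Hq_rep[OF a(1)] Hq_rep[OF a(2)] by blast
qed

lemma eq_Hq: "h \<in> Hq A \<Longrightarrow> h' \<in> Hq A \<Longrightarrow> h = h' \<longleftrightarrow> rep h - rep h' \<in> A"
proof -
  assume a: "h \<in> Hq A" "h' \<in> Hq A"
  have "\<And>x y. h = rho A x \<Longrightarrow> h' = rho A y \<Longrightarrow> h = h' \<longleftrightarrow> x - y \<in> A" using rho_eq by simp
  then show ?thesis using Hq_rep[OF a(1)] Hq_rep[OF a(2)] by blast
qed

lemma hadd_Hq_eq: "h \<in> Hq A \<Longrightarrow> h' \<in> Hq A \<Longrightarrow> hadd h h' = rho A (rep h + rep h')"
proof -
  assume a: "h \<in> Hq A" "h' \<in> Hq A"
  have "\<And>x y. h = rho A x \<Longrightarrow> h' = rho A y \<Longrightarrow> hadd h h' = rho A (x + y)" using hadd_rho by simp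
  then show ?thesis using Hq_rep[OF a(1)] Hq_rep[OF a(2)] by blast
qed

lemma hadd_Hq: "h \<in> Hq A \<Longrightarrow> h' \<in> Hq A \<Longrightarrow> hadd h h' \<in> Hq A"
  using hadd_Hq_eq rho_Hq by simp

lemma hle_refl: "h \<in> Hq A \<Longrightarrow> hle A h h" using hle_Hq Rl_refl by simp

lemma hle_trans: "h1 \<in> Hq A \<Longrightarrow> h2 \<in> Hq A \<Longrightarrow> h3 \<in> Hq A \<Longrightarrow> hle A h1 h2 \<Longrightarrow> hle A h2 h3 \<Longrightarrow> hle A h1 h3"
proof -
  assume a: "h1 \<in> Hq A" "h2 \<in> Hq A" "h3 \<in> Hq A" "hle A h1 h2" "hle A h2 h3"
  then have "Rl (rep h1) (rep h2)" "Rl (rep h2) (rep h3)" by (simp_all add: hle_Hq)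
  then have "Rl (rep h1) (rep h3)" by (rule Rl_trans)
  then show ?thesis using a by (simp add: hle_Hq)
qed

lemma hle_antisym: "h1 \<in> Hq A \<Longrightarrow> h2 \<in> Hq A \<Longrightarrow> hle A h1 h2 \<Longrightarrow> hle A h2 h1 \<Longrightarrow> h1 = h2"
proof -
  assume a: "h1 \<in> Hq A" "h2 \<in> Hq A" "hle A h1 h2" "hle A h2 h1"
  then have "Rl (rep h1) (rep h2)" "Rl (rep h2) (rep h1)" by (simp_all add: hle_Hq)
  then have "rep h1 - rep h2 \<in> A" by (rule Rl_antisym)
  then show ?thesis using a by (simp add: eq_Hq)
qed

lemma hle_total: "h1 \<in> Hq A \<Longrightarrow> h2 \<in> Hq A \<Longrightarrow> hle A h1 h2 \<or> hle A h2 h1"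
  using Rl_total[of "rep h1" "rep h2"] by (simp add: hle_Hq)

lemma hle_hadd_mono:
  assumes "a \<in> Hq A" "b \<in> Hq A" "h \<in> Hq A" "h' \<in> Hq A" "hle A a h" "hle A b h'"
  shows "hle A (hadd a b) (hadd h h')"
proof -
  have "Rl (rep a) (rep h)" "Rl (rep b) (rep h')" using assms by (simp_all add: hle_Hq)
  then have "Rl (rep a + rep b) (rep h + rep h')" by (rule Rl_add)
  then show ?thesis using assms hadd_Hq_eq hle_rho by simp
qed

lemma hadd_eq_min:
  assumes "a \<in> Hq A" "b \<in> Hq A" "h \<in> Hq A" "h' \<in> Hq A" "hle A a h" "hle A b h'"
    and e: "hadd a b = hadd h h'"
  shows "h = a \<and> h' = b"
proof -
  have r1: "Rl (rep a) (rep h)" "Rl (rep b) (rep h')" using assms by (simp_all add: hle_Hq)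
  have e2: "(rep a + rep b) - (rep h + rep h') \<in> A" using e assms hadd_Hq_eq rho_eq by simp
  have "rep a - rep h \<in> A"
  proof (rule ccontr)
    assume "rep a - rep h \<notin> A"
    then show False using Rl_add_strict[OF r1(1) _ r1(2)] e2 by blast
  qed
  moreover have "rep b - rep h' \<in> A"
  proof (rule ccontr)
    assume "rep b - rep h' \<notin> A"
    then have "(rep b + rep a) - (rep h' + rep h) \<notin> A" using Rl_add_strict[OF r1(2) _ r1(1)] by blast
    then show False using e2 by (simp add: add.commute)
  qed
  ultimately show ?thesis using assms A_swap by (simp add: eq_Hq)
qed

lemma wo_min: "well_ordered_H A S \<Longrightarrow> S \<noteq> {} \<Longrightarrow> \<exists>m\<in>S. \<forall>t\<in>S. hle A m t"
  unfolding well_ordered_H_def by blast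

lemma wo_union:
  assumes "S1 \<subseteq> Hq A" "S2 \<subseteq> Hq A" "well_ordered_H A S1" "well_ordered_H A S2"
  shows "well_ordered_H A (S1 \<union> S2)"
  unfolding well_ordered_H_def
proof (intro allI impI)
  fix T assume T: "T \<subseteq> S1 \<union> S2 \<and> T \<noteq> {}"
  show "\<exists>m\<in>T. \<forall>t\<in>T. hle A m t"
  proof (cases "T \<inter> S1 = {}")
    case True
    then have "T \<subseteq> S2" using T by blast
    then show ?thesis using assms(4) T unfolding well_ordered_H_def by blast
  next
    case F1: False
    obtain m1 where m1: "m1 \<in> T \<inter> S1" "\<forall>t\<in>T \<inter> S1. hle A m1 t"
      using assms(3) F1 unfolding well_ordered_H_def by (meson inf_le2)
    show ?thesis
    proof (cases "T \<inter> S2 = {}")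
      case True
      then have "T \<subseteq> S1" using T by blast
      then show ?thesis using assms(3) T unfolding well_ordered_H_def by blast
    next
      case False
      obtain m2 where m2: "m2 \<in> T \<inter> S2" "\<forall>t\<in>T \<inter> S2. hle A m2 t"
        using assms(4) False unfolding well_ordered_H_def by (meson inf_le2)
      have TH: "T \<subseteq> Hq A" using T assms by blast
      show ?thesis
      proof (cases "hle A m1 m2")
        case True
        have "\<forall>t\<in>T. hle A m1 t"
        proof
          fix t assume "t \<in> T"
          then consider "t \<in> T \<inter> S1" | "t \<in> T \<inter> S2" using T by blast
          then show "hle A m1 t"
          proof cases
            case 1 then show ?thesis using m1 by blast
          next
            case 2
            then have "hle A m2 t" using m2 by blast
            moreover have "m1 \<in> Hq A" "m2 \<in> Hq A" "t \<in> Hq A" using m1 m2 TH \<open>t \<in> T\<close> by blast+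
            ultimately show ?thesis using hle_trans[of m1 m2 t] True by blast
          qed
        qed
        then show ?thesis using m1 by blast
      next
        case False
        moreover have "m1 \<in> Hq A" "m2 \<in> Hq A" using m1 m2 TH by blast+
        ultimately have F: "hle A m2 m1" using hle_total by blast
        have "\<forall>t\<in>T. hle A m2 t"
        proof
          fix t assume "t \<in> T"
          then consider "t \<in> T \<inter> S1" | "t \<in> T \<inter> S2" using T by blast
          then show "hle A m2 t"
          proof cases
            case 2 then show ?thesis using m2 by blast
          next
            case 1
            then have "hle A m1 t" using m1 by blast
            moreover have "m1 \<in> Hq A" "m2 \<in> Hq A" "t \<in> Hq A" using m1 m2 TH \<open>t \<in> T\<close> by blast+
            ultimately show ?thesis using hle_trans[of m2 m1 t] F by blast
          qed
        qed
        then show ?thesis using m2 by blast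
      qed
    qed
  qed
qed

lemma val_min:
  assumes "supp f \<subseteq> Hq A" "m \<in> supp f" "\<forall>t\<in>supp f. hle A m t"
  shows "fs_val A v f = Some (the (v (f m)), m)"
proof -
  have nz: "f \<noteq> fs_zero" using assms(2) unfolding supp_def fs_zero_def by auto
  have "(THE h. h \<in> supp f \<and> (\<forall>h'\<in>supp f. hle A h h')) = m"
  proof (rule the_equality)
    show "m \<in> supp f \<and> (\<forall>h'\<in>supp f. hle A m h')" using assms by blast
    fix h assume "h \<in> supp f \<and> (\<forall>h'\<in>supp f. hle A h h')"
    then have "h \<in> Hq A" "hle A h m" "hle A m h" using assms by blast+
    moreover have "m \<in> Hq A" using assms by blast
    ultimately show "h = m" using hle_antisym by blast
  qed
  then show ?thesis using nz unfolding fs_val_def Let_def by simp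
qed

end

locale setting = cvx A for A :: "'g::linordered_ab_group_add set" +
  fixes \<alpha> :: "'g set \<Rightarrow> 'g" and v :: "'k::field \<Rightarrow> 'g option" and \<sigma> :: "'g \<Rightarrow> 'k"
  assumes tr: "transversal A \<alpha>" and vf: "valued_field A v" and cr: "cross_section A v \<sigma>"
begin

lemma v_None: "v x = None \<longleftrightarrow> x = 0" using vf unfolding valued_field_def by simp
lemma v_A: "x \<noteq> 0 \<Longrightarrow> the (v x) \<in> A" using vf unfolding valued_field_def by blast
lemma v_mul: "v (x * y) = oi_add (v x) (v y)" using vf unfolding valued_field_def by blast
lemma v_ultra: "oi_le (v x) (v (x + y)) \<or> oi_le (v y) (v (x + y))" using vf unfolding valued_field_def by blast
lemma v_Some: "x \<noteq> 0 \<Longrightarrow> v x = Some (the (v x))" using v_None by (cases "v x") auto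
lemma sig_nz: "a \<in> A \<Longrightarrow> \<sigma> a \<noteq> 0" using cr unfolding cross_section_def by blast
lemma sig_v: "a \<in> A \<Longrightarrow> v (\<sigma> a) = Some a" using cr unfolding cross_section_def by blast
lemma alpha_rho: "h \<in> Hq A \<Longrightarrow> rho A (\<alpha> h) = h" using tr unfolding transversal_def by blast

lemma beta_A: assumes "a \<in> Hq A" "b \<in> Hq A" shows "beta \<alpha> a b \<in> A"
proof -
  have "hadd a b = rho A (\<alpha> a + \<alpha> b)" using alpha_rho[OF assms(1)] alpha_rho[OF assms(2)] hadd_rho by metis
  moreover have "rho A (\<alpha> (hadd a b)) = hadd a b" using alpha_rho hadd_Hq assms by blast
  ultimately have "\<alpha> (hadd a b) - (\<alpha> a + \<alpha> b) \<in> A" using rho_eq by simp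
  then show ?thesis unfolding beta_def by (simp add: algebra_simps)
qed

lemma mul_val:
  assumes fH: "supp f \<subseteq> Hq A" and gH: "supp g \<subseteq> Hq A"
    and a: "a \<in> supp f" "\<forall>t\<in>supp f. hle A a t"
    and b: "b \<in> supp g" "\<forall>t\<in>supp g. hle A b t"
  shows "fs_val A v (fs_mul \<alpha> \<sigma> f g) = Some (the (v (f a)) + the (v (g b)) - beta \<alpha> a b, hadd a b)"
proof -
  define P where "P l = {(h, h'). h \<in> supp f \<and> h' \<in> supp g \<and> hadd h h' = l}" for l
  have aH: "a \<in> Hq A" and bH: "b \<in> Hq A" using a b fH gH by blast+
  have P0: "P (hadd a b) = {(a, b)}"
  proof
    show "{(a, b)} \<subseteq> P (hadd a b)" using a b unfolding P_def by simp
    show "P (hadd a b) \<subseteq> {(a, b)}"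
    proof
      fix q assume "q \<in> P (hadd a b)"
      then obtain h h' where q: "q = (h, h')" "h \<in> supp f" "h' \<in> supp g" "hadd a b = hadd h h'"
        unfolding P_def by auto
      have "h = a \<and> h' = b"
        using hadd_eq_min[OF aH bH _ _ _ _ q(4)] q fH gH a b by blast
      then show "q \<in> {(a, b)}" using q by simp
    qed
  qed
  have mul_eq: "fs_mul \<alpha> \<sigma> f g l = (\<Sum>(h, h') \<in> P l. f h * g h' * \<sigma> (- beta \<alpha> h h'))" for l
    unfolding fs_mul_def P_def by simp
  have bA: "- beta \<alpha> a b \<in> A" using beta_A[OF aH bH] A_neg by blast
  have fa: "f a \<noteq> 0" and gb: "g b \<noteq> 0" using a b unfolding supp_def by auto
  have c0: "fs_mul \<alpha> \<sigma> f g (hadd a b) = f a * g b * \<sigma> (- beta \<alpha> a b)"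
    using mul_eq P0 by simp
  have cnz: "f a * g b * \<sigma> (- beta \<alpha> a b) \<noteq> 0" using fa gb sig_nz[OF bA] by simp
  have mins: "\<forall>t\<in>supp (fs_mul \<alpha> \<sigma> f g). hle A (hadd a b) t"
  proof
    fix l assume "l \<in> supp (fs_mul \<alpha> \<sigma> f g)"
    then have "(\<Sum>(h, h') \<in> P l. f h * g h' * \<sigma> (- beta \<alpha> h h')) \<noteq> 0" using mul_eq unfolding supp_def by simp
    then have "P l \<noteq> {}" by auto
    then obtain h h' where q: "h \<in> supp f" "h' \<in> supp g" "hadd h h' = l" unfolding P_def by auto
    then have "hle A (hadd a b) (hadd h h')" using hle_hadd_mono[OF aH bH] a b fH gH by blast
    then show "hle A (hadd a b) l" using q by simp
  qed
  have suppH: "supp (fs_mul \<alpha> \<sigma> f g) \<subseteq> Hq A"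
  proof
    fix l assume "l \<in> supp (fs_mul \<alpha> \<sigma> f g)"
    then have "(\<Sum>(h, h') \<in> P l. f h * g h' * \<sigma> (- beta \<alpha> h h')) \<noteq> 0" using mul_eq unfolding supp_def by simp
    then have "P l \<noteq> {}" by auto
    then obtain h h' where q: "h \<in> supp f" "h' \<in> supp g" "hadd h h' = l" unfolding P_def by auto
    then show "l \<in> Hq A" using hadd_Hq fH gH by blast
  qed
  have cin: "hadd a b \<in> supp (fs_mul \<alpha> \<sigma> f g)" using c0 cnz unfolding supp_def by simp
  have "fs_val A v (fs_mul \<alpha> \<sigma> f g) = Some (the (v (f a * g b * \<sigma> (- beta \<alpha> a b))), hadd a b)"
    using val_min[OF suppH cin mins] c0 by simp
  moreover have "v (f a * g b * \<sigma> (- beta \<alpha> a b)) = Some (the (v (f a)) + the (v (g b)) - beta \<alpha> a b)"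
  proof -
    obtain va vb where va: "v (f a) = Some va" and vb: "v (g b) = Some vb"
      using fa gb v_None by (metis option.exhaust)
    show ?thesis
      by (simp add: v_mul oi_add_def va vb sig_v[OF bA] diff_conv_add_uminus del: add_uminus_conv_diff)
  qed
  ultimately show ?thesis by simp
qed


lemma zero_supp: "f = fs_zero \<longleftrightarrow> supp f = {}"
  unfolding fs_zero_def supp_def by auto

lemma FS_min: "f \<in> FS A D \<Longrightarrow> f \<noteq> fs_zero \<Longrightarrow> \<exists>m\<in>supp f. \<forall>t\<in>supp f. hle A m t"
proof -
  assume "f \<in> FS A D" "f \<noteq> fs_zero"
  then have "well_ordered_H A (supp f)" "supp f \<noteq> {}" unfolding FS_def by (auto simp: zero_supp)
  then show ?thesis by (rule wo_min)
qed

lemma FS_H: "f \<in> FS A D \<Longrightarrow> supp f \<subseteq> Hq A" unfolding FS_def by blast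
lemma FS_wo: "f \<in> FS A D \<Longrightarrow> well_ordered_H A (supp f)" unfolding FS_def by blast

lemma val_zero: "fs_val A v fs_zero = None" unfolding fs_val_def by simp

lemma mul_zero1: "fs_mul \<alpha> \<sigma> fs_zero g = fs_zero"
  unfolding fs_mul_def fs_zero_def supp_def by (rule ext) simp
lemma mul_zero2: "fs_mul \<alpha> \<sigma> f fs_zero = fs_zero"
  unfolding fs_mul_def fs_zero_def supp_def by (rule ext) simp

lemma gbi_le_refl: "gbi_le A z z"
  unfolding gbi_le_def gb_le_def by (cases z) auto

lemma ultra_aux:
  assumes x: "x \<in> FS A D" and y: "y \<in> FS A D"
    and a: "a \<in> supp x" "\<forall>t\<in>supp x. hle A a t"
    and b: "b \<in> supp y" "\<forall>t\<in>supp y. hle A b t"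
    and ab: "hle A a b"
    and m: "m \<in> supp (fs_add x y)" "\<forall>t\<in>supp (fs_add x y). hle A m t"
  shows "gb_le A (the (v (x a)), a) (the (v (fs_add x y m)), m)
       \<or> gb_le A (the (v (y b)), b) (the (v (fs_add x y m)), m)"
proof -
  have xH: "supp x \<subseteq> Hq A" and yH: "supp y \<subseteq> Hq A" using x y FS_H by blast+
  have sub: "supp (fs_add x y) \<subseteq> supp x \<union> supp y" unfolding supp_def fs_add_def by auto
  have aH: "a \<in> Hq A" "b \<in> Hq A" "m \<in> Hq A" using a b m sub xH yH by blast+
  have am: "hle A a m"
  proof -
    have "m \<in> supp x \<or> m \<in> supp y" using m sub by blast
    then show ?thesis
    proof
      assume "m \<in> supp x" then show ?thesis using a by blast
    next
      assume "m \<in> supp y" then have "hle A b m" using b by blast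
      then show ?thesis using hle_trans[of a b m, OF aH ab] by simp
    qed
  qed
  show ?thesis
  proof (cases "m = a")
    case False
    then have "hless A a m" using am unfolding hless_def by simp
    then show ?thesis unfolding gb_le_def by simp
  next
    case True
    have sa: "x a + y a \<noteq> 0" using m True unfolding supp_def fs_add_def by simp
    show ?thesis
    proof (cases "y a = 0")
      case True
      then show ?thesis using \<open>m = a\<close> unfolding gb_le_def fs_add_def by simp
    next
      case False
      then have "a \<in> supp y" unfolding supp_def by simp
      then have "hle A b a" using b by blast
      then have "a = b" using hle_antisym[of a b, OF aH(1,2) ab] by simp
      have xa: "x a \<noteq> 0" using a unfolding supp_def by simp
      obtain va vb vs where va: "v (x a) = Some va" and vb: "v (y a) = Some vb"
        and vs: "v (x a + y a) = Some vs"
        using xa False sa v_None by (meson not_None_eq)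
      have "oi_le (v (x a)) (v (x a + y a)) \<or> oi_le (v (y a)) (v (x a + y a))" by (rule v_ultra)
      then have "va \<le> vs \<or> vb \<le> vs" using va vb vs unfolding oi_le_def by simp
      then have "gb_le A (va, a) (vs, a) \<or> gb_le A (vb, a) (vs, a)" unfolding gb_le_def by auto
      then show ?thesis using \<open>m = a\<close> \<open>a = b\<close> va vb vs unfolding fs_add_def by simp
    qed
  qed
qed

lemma main: "is_valuation_Gbeta A \<alpha> (FS A D) fs_zero fs_add (fs_mul \<alpha> \<sigma>) (fs_val A v)"
  unfolding is_valuation_Gbeta_def
proof (intro conjI ballI)
  fix x :: "'g set \<Rightarrow> 'k" assume x: "x \<in> FS A D"
  show "fs_val A v x = None \<or> (\<exists>p. fs_val A v x = Some p \<and> fst p \<in> A \<and> snd p \<in> Hq A)"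
  proof (cases "x = fs_zero")
    case True then show ?thesis using val_zero by simp
  next
    case False
    then obtain m where m: "m \<in> supp x" "\<forall>t\<in>supp x. hle A m t" using FS_min x by blast
    have "fs_val A v x = Some (the (v (x m)), m)" using val_min[OF FS_H[OF x] m] .
    moreover have "the (v (x m)) \<in> A" using v_A m unfolding supp_def by simp
    moreover have "m \<in> Hq A" using m FS_H[OF x] by blast
    ultimately show ?thesis by simp
  qed
  show "(fs_val A v x = None) = (x = fs_zero)" unfolding fs_val_def Let_def by simp
next
  fix x y :: "'g set \<Rightarrow> 'k" assume x: "x \<in> FS A D" and y: "y \<in> FS A D"
  show "fs_val A v (fs_mul \<alpha> \<sigma> x y) = gbi_add \<alpha> (fs_val A v x) (fs_val A v y)"
  proof (cases "x = fs_zero \<or> y = fs_zero")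
    case True
    then show ?thesis using mul_zero1 mul_zero2 val_zero unfolding gbi_add_def
      by (cases "fs_val A v x") auto
  next
    case False
    then obtain a b where a: "a \<in> supp x" "\<forall>t\<in>supp x. hle A a t"
      and b: "b \<in> supp y" "\<forall>t\<in>supp y. hle A b t" using FS_min x y by meson
    show ?thesis
      using mul_val[OF FS_H[OF x] FS_H[OF y] a b] val_min[OF FS_H[OF x] a] val_min[OF FS_H[OF y] b]
      unfolding gbi_add_def gb_add_def by simp
  qed
  show "gbi_le A (fs_val A v x) (fs_val A v (fs_add x y)) \<or> gbi_le A (fs_val A v y) (fs_val A v (fs_add x y))"
  proof (cases "fs_add x y = fs_zero")
    case True then show ?thesis using val_zero unfolding gbi_le_def by simp
  next
    case snz: False
    show ?thesis
    proof (cases "x = fs_zero")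
      case True
      then have "fs_add x y = y" unfolding fs_add_def fs_zero_def by simp
      then show ?thesis using gbi_le_refl by simp
    next
      case xnz: False
      show ?thesis
      proof (cases "y = fs_zero")
        case True
        then have "fs_add x y = x" unfolding fs_add_def fs_zero_def by simp
        then show ?thesis using gbi_le_refl by simp
      next
        case ynz: False
        obtain a where a: "a \<in> supp x" "\<forall>t\<in>supp x. hle A a t" using FS_min x xnz by blast
        obtain b where b: "b \<in> supp y" "\<forall>t\<in>supp y. hle A b t" using FS_min y ynz by blast
        have sub: "supp (fs_add x y) \<subseteq> supp x \<union> supp y" unfolding supp_def fs_add_def by auto
        have wu: "well_ordered_H A (supp x \<union> supp y)"
          by (rule wo_union[OF FS_H[OF x] FS_H[OF y] FS_wo[OF x] FS_wo[OF y]])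
        have "well_ordered_H A (supp (fs_add x y))"
          using wu sub unfolding well_ordered_H_def by (metis subset_trans)
        then obtain m where m: "m \<in> supp (fs_add x y)" "\<forall>t\<in>supp (fs_add x y). hle A m t"
          using wo_min[of "supp (fs_add x y)"] snz by (auto simp add: zero_supp)
        have sH: "supp (fs_add x y) \<subseteq> Hq A" using sub FS_H[OF x] FS_H[OF y] by blast
        have vx: "fs_val A v x = Some (the (v (x a)), a)" using val_min[OF FS_H[OF x] a] .
        have vy: "fs_val A v y = Some (the (v (y b)), b)" using val_min[OF FS_H[OF y] b] .
        have vs: "fs_val A v (fs_add x y) = Some (the (v (fs_add x y m)), m)" using val_min[OF sH m] .
        have comm: "fs_add y x = fs_add x y" unfolding fs_add_def by (rule ext) (simp add: add.commute)
        have "a \<in> Hq A" "b \<in> Hq A" using a(1) b(1) FS_H[OF x] FS_H[OF y] by blast+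
        then consider "hle A a b" | "hle A b a" using hle_total by metis
        then show ?thesis
        proof cases
          case 1
          then show ?thesis using ultra_aux[OF x y a b 1 m] vx vy vs unfolding gbi_le_def by simp
        next
          case 2
          have "gb_le A (the (v (y b)), b) (the (v (fs_add y x m)), m)
             \<or> gb_le A (the (v (x a)), a) (the (v (fs_add y x m)), m)"
            using ultra_aux[OF y x b a 2] m comm by simp
          then show ?thesis using vx vy vs comm unfolding gbi_le_def by auto
        qed
      qed
    qed
  qed
qed

end

theorem proposition2p2:
  fixes A :: "'g::linordered_ab_group_add set"
    and \<alpha> :: "'g set \<Rightarrow> 'g"
    and v :: "'k::field_char_0 \<Rightarrow> 'g option"
    and \<sigma> :: "'g \<Rightarrow> 'k"
    and p :: nat
    and D :: "'d set"
  assumes "smallest_nonzero_convex A"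
    and "transversal A \<alpha>"
    and "valued_field A v"
    and "residue_char v p"
    and "cross_section A v \<sigma>"
    and "infinite D"
  shows "is_valuation_Gbeta A \<alpha> (FS A D) fs_zero fs_add (fs_mul \<alpha> \<sigma>) (fs_val A v)"
proof -
  have "convex_subgroup A" using assms(1) unfolding smallest_nonzero_convex_def by blast
  then interpret setting A \<alpha> v \<sigma>
    by (unfold_locales) (use assms in auto)
  show ?thesis by (rule main)
qed

end
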